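(* Let $(H,\theta)$ be a Higgs bundle over a complex manifold $B$ with a smooth Hermitian metric $h$ on $H$. If the Higgs curvature $(D^H)^2$ has vanishing $(2,0)$-part (equivalently $[\partial^h,\theta]=0$), then the fundamental form $\omega=i\sum_{j,k}(\theta_j,\theta_k)\,dt^j\wedge d\bar t^k$ of the Hodge semi-metric is $d$-closed.
   Context: A Higgs bundle over $B$ is a pair $(H,\theta)$ with $H$ a holomorphic vector bundle and $\theta$ an $\mathrm{End}(H)$-valued holomorphic $1$-form with $\theta\wedge\theta\equiv0$. Locally $\theta=\sum_j dt^j\otimes\theta_j$. $(\cdot,\cdot)$ is the Hermitian metric on $\mathrm{End}(H)\cong H\otimes H^*$ induced by $h$, and the Hodge semi-metric on $B$ is $(v,w)_H:=(\theta_v,\theta_w)$ with $\theta_v=v\lrcorner\theta$. $D^h=\bar\partial+\partial^h$ is the Chern connection of $(H,h)$, $\theta^*=\sum_j d\bar t^j\otimes\theta_j^*$ with $\theta_j^*$ the $h$-adjoint, and the Higgs connection is $D^H:=D^h+\theta+\theta^*$; its curvature $(D^H)^2$ is the Higgs curvature. *)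

theory Defs
  imports "HOL-Analysis.Analysis"
begin

(* Local (coordinate-chart) setting: B is replaced by an open set U of complex^'n with
   holomorphic coordinates t = (t^j)_j, and H|_U is trivialised by a holomorphic frame
   e_1..e_r (index type 'r).  Sections are column vectors, endomorphisms are matrices
   complex^'r^'r acting on columns. *)

fun iter_pd :: "'a::real_normed_vector list \<Rightarrow> ('a \<Rightarrow> 'b::real_normed_vector) \<Rightarrow> 'a \<Rightarrow> 'b" where
  "iter_pd [] f = f"
| "iter_pd (v # vs) f = (\<lambda>t. frechet_derivative (iter_pd vs f) (at t) v)"

definition smooth_on :: "'a::real_normed_vector set \<Rightarrow> ('a \<Rightarrow> 'b::real_normed_vector) \<Rightarrow> bool" where
  "smooth_on U f \<longleftrightarrow> (\<forall>vs. \<forall>t\<in>U. iter_pd vs f differentiable (at t))"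

definition holo_on :: "(complex^'n) set \<Rightarrow> (complex^'n \<Rightarrow> complex) \<Rightarrow> bool" where
  "holo_on U f \<longleftrightarrow> (\<forall>t\<in>U. f differentiable (at t) \<and>
     (\<forall>v. frechet_derivative f (at t) (\<i> *s v) = \<i> * frechet_derivative f (at t) v))"

definition wirt :: "(complex^'n \<Rightarrow> complex) \<Rightarrow> 'n \<Rightarrow> complex^'n \<Rightarrow> complex" where
  "wirt f j t = (frechet_derivative f (at t) (axis j 1) - \<i> * frechet_derivative f (at t) (axis j \<i>)) / 2"

definition wirtbar :: "(complex^'n \<Rightarrow> complex) \<Rightarrow> 'n \<Rightarrow> complex^'n \<Rightarrow> complex" where
  "wirtbar f j t = (frechet_derivative f (at t) (axis j 1) + \<i> * frechet_derivative f (at t) (axis j \<i>)) / 2"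

definition mwirt :: "(complex^'n \<Rightarrow> complex^'r^'r) \<Rightarrow> 'n \<Rightarrow> complex^'n \<Rightarrow> complex^'r^'r" where
  "mwirt F j t = (\<chi> a b. wirt (\<lambda>s. F s $ a $ b) j t)"

definition cadj :: "complex^'r^'r \<Rightarrow> complex^'r^'r" where
  "cadj M = (\<chi> i j. cnj (M $ j $ i))"

(* Higgs bundle in the frame: theta = sum_j dt^j (x) theta_j, theta_j holomorphic matrices,
   theta /\ theta = 0  <->  [theta_j, theta_k] = 0 *)
definition higgs_field :: "(complex^'n) set \<Rightarrow> ('n \<Rightarrow> complex^'n \<Rightarrow> complex^'r^'r) \<Rightarrow> bool" where
  "higgs_field U \<theta> \<longleftrightarrow> (\<forall>j a b. holo_on U (\<lambda>t. \<theta> j t $ a $ b)) \<and>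
     (\<forall>j k. \<forall>t\<in>U. \<theta> j t ** \<theta> k t = \<theta> k t ** \<theta> j t)"

(* Smooth Hermitian metric h on H|_U, given by the matrix G with G$a$b = h(e_b, e_a),
   so that h(u,v) = v^H G u for coefficient columns u, v. *)
definition herm_metric :: "(complex^'n) set \<Rightarrow> (complex^'n \<Rightarrow> complex^'r^'r) \<Rightarrow> bool" where
  "herm_metric U G \<longleftrightarrow> (\<forall>a b. smooth_on U (\<lambda>t. G t $ a $ b)) \<and>
     (\<forall>t\<in>U. cadj (G t) = G t \<and>
        (\<forall>v::complex^'r. v \<noteq> 0 \<longrightarrow> 0 < Re (\<Sum>a\<in>UNIV. \<Sum>b\<in>UNIV. cnj (v $ a) * G t $ a $ b * v $ b)))"

(* Chern connection D^h = d + A in the holomorphic frame, A = sum_j A_j dt^j, A_j = G^{-1} dG/dt^j *)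
definition chern_conn :: "(complex^'n \<Rightarrow> complex^'r^'r) \<Rightarrow> 'n \<Rightarrow> complex^'n \<Rightarrow> complex^'r^'r" where
  "chern_conn G j t = matrix_inv (G t) ** mwirt G j t"

(* h-adjoint of an endomorphism: h(M u, v) = h(u, M^adj v) *)
definition hadj :: "(complex^'n \<Rightarrow> complex^'r^'r) \<Rightarrow> complex^'n \<Rightarrow> complex^'r^'r \<Rightarrow> complex^'r^'r" where
  "hadj G t M = matrix_inv (G t) ** cadj M ** G t"

(* Hermitian metric on End(H) = H (x) H^* induced by h: (M,N) = tr(M N^adj) *)
definition end_ip :: "(complex^'n \<Rightarrow> complex^'r^'r) \<Rightarrow> complex^'n \<Rightarrow> complex^'r^'r \<Rightarrow> complex^'r^'r \<Rightarrow> complex" where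
  "end_ip G t M N = trace (M ** hadj G t N)"

definition hodge_coeff :: "(complex^'n \<Rightarrow> complex^'r^'r) \<Rightarrow> ('n \<Rightarrow> complex^'n \<Rightarrow> complex^'r^'r) \<Rightarrow> 'n \<Rightarrow> 'n \<Rightarrow> complex^'n \<Rightarrow> complex" where
  "hodge_coeff G \<theta> j k t = end_ip G t (\<theta> j t) (\<theta> k t)"

(* Coefficient of dt^l /\ dt^j in the (2,0)-part of the Higgs curvature (D^H)^2, where
   D^H = d + A + theta + theta-adjoint; (D^H)^2 = dM + M/\M with M = A + theta + theta-adjoint, whose
   (2,0)-part is d'A + A/\A + d'theta + A/\theta + theta/\A + theta/\theta. *)
definition higgs_curv_20 :: "(complex^'n \<Rightarrow> complex^'r^'r) \<Rightarrow> ('n \<Rightarrow> complex^'n \<Rightarrow> complex^'r^'r) \<Rightarrow> 'n \<Rightarrow> 'n \<Rightarrow> complex^'n \<Rightarrow> complex^'r^'r" where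
  "higgs_curv_20 G \<theta> l j t =
     (mwirt (chern_conn G j) l t - mwirt (chern_conn G l) j t)
   + (chern_conn G l t ** chern_conn G j t - chern_conn G j t ** chern_conn G l t)
   + (mwirt (\<theta> j) l t - mwirt (\<theta> l) j t)
   + (chern_conn G l t ** \<theta> j t - chern_conn G j t ** \<theta> l t)
   + (\<theta> l t ** chern_conn G j t - \<theta> j t ** chern_conn G l t)
   + (\<theta> l t ** \<theta> j t - \<theta> j t ** \<theta> l t)"

(* omega = i sum_{j,k} g_{jk} dt^j /\ d(conj t^k), g_{jk} = (theta_j, theta_k).
   d omega = d' omega + d'' omega;
   coefficient of dt^l /\ dt^j /\ d(conj t^k) in d' omega:  i (d_l g_{jk} - d_j g_{lk});
   coefficient of dt^j /\ d(conj t^l) /\ d(conj t^k) in d'' omega: -i (dbar_l g_{jk} - dbar_k g_{jl}). *)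
definition domega_21 :: "(complex^'n \<Rightarrow> complex^'r^'r) \<Rightarrow> ('n \<Rightarrow> complex^'n \<Rightarrow> complex^'r^'r) \<Rightarrow> 'n \<Rightarrow> 'n \<Rightarrow> 'n \<Rightarrow> complex^'n \<Rightarrow> complex" where
  "domega_21 G \<theta> l j k t =
     \<i> * (wirt (hodge_coeff G \<theta> j k) l t - wirt (hodge_coeff G \<theta> l k) j t)"

definition domega_12 :: "(complex^'n \<Rightarrow> complex^'r^'r) \<Rightarrow> ('n \<Rightarrow> complex^'n \<Rightarrow> complex^'r^'r) \<Rightarrow> 'n \<Rightarrow> 'n \<Rightarrow> 'n \<Rightarrow> complex^'n \<Rightarrow> complex" where
  "domega_12 G \<theta> j l k t =
     - \<i> * (wirtbar (hodge_coeff G \<theta> j k) l t - wirtbar (hodge_coeff G \<theta> j l) k t)"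

definition fundamental_form_d_closed :: "(complex^'n) set \<Rightarrow> (complex^'n \<Rightarrow> complex^'r^'r) \<Rightarrow> ('n \<Rightarrow> complex^'n \<Rightarrow> complex^'r^'r) \<Rightarrow> bool" where
  "fundamental_form_d_closed U G \<theta> \<longleftrightarrow>
     (\<forall>t\<in>U. \<forall>l j k. domega_21 G \<theta> l j k t = 0 \<and> domega_12 G \<theta> j l k t = 0)"

end

theory Submission
  imports Defs
begin


lemma schwarz_half:
  fixes f :: "'a::real_normed_vector \<Rightarrow> complex"
  assumes U: "open U" "t \<in> U"
    and df: "\<forall>x\<in>U. f differentiable (at x)"
    and dphi: "\<forall>x\<in>U. (\<lambda>y. frechet_derivative f (at y) v) differentiable (at x)"
    and cont: "continuous (at t) (\<lambda>x. frechet_derivative (\<lambda>y. frechet_derivative f (at y) v) (at x) w)"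
    and e: "e > 0"
  shows "\<exists>d>0. \<forall>s. 0 < s \<longrightarrow> s < d \<longrightarrow> norm (f (t + s *\<^sub>R v + s *\<^sub>R w) - f (t + s *\<^sub>R v) - f (t + s *\<^sub>R w) + f t
           - (s^2) *\<^sub>R frechet_derivative (\<lambda>y. frechet_derivative f (at y) v) (at t) w) \<le> e * s^2"
proof -
  define \<phi> where "\<phi> = (\<lambda>y. frechet_derivative f (at y) v)"
  define B where "B = frechet_derivative \<phi> (at t) w"
  obtain \<delta>1 where d1: "\<delta>1 > 0" "\<forall>x. dist x t < \<delta>1 \<longrightarrow> dist (frechet_derivative \<phi> (at x) w) B < e"
    using cont e unfolding continuous_at_eps_delta \<phi>_def B_def by blast
  obtain \<delta>2 where d2: "\<delta>2 > 0" "ball t \<delta>2 \<subseteq> U"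
    using U open_contains_ball by blast
  define \<delta> where "\<delta> = min \<delta>1 \<delta>2"
  have \<delta>: "\<delta> > 0" "ball t \<delta> \<subseteq> U" "\<forall>x. dist x t < \<delta> \<longrightarrow> dist (frechet_derivative \<phi> (at x) w) B < e"
    using d1 d2 by (auto simp: \<delta>_def)
  define d where "d = \<delta> / (norm v + norm w + 1)"
  have "d > 0" using \<delta> by (simp add: d_def add_nonneg_pos)
  show ?thesis
  proof (intro exI[of _ d] conjI allI impI)
    show "d > 0" by fact
    fix s :: real assume s: "0 < s" "s < d"
    have inball: "t + r *\<^sub>R v + q *\<^sub>R w \<in> ball t \<delta>" if "0 \<le> r" "r \<le> s" "0 \<le> q" "q \<le> s" for r q
    proof -
      have "norm (r *\<^sub>R v + q *\<^sub>R w) \<le> r * norm v + q * norm w"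
        using that by (metis abs_of_nonneg norm_scaleR norm_triangle_ineq)
      also have "\<dots> \<le> s * norm v + s * norm w"
        using that by (intro add_mono mult_right_mono) auto
      also have "\<dots> < d * (norm v + norm w + 1)"
      proof -
        have "s * norm v + s * norm w = s * (norm v + norm w)" by (simp add: algebra_simps)
        also have "\<dots> \<le> s * (norm v + norm w + 1)" using s by simp
        also have "\<dots> < d * (norm v + norm w + 1)"
          using s by (intro mult_strict_right_mono) (auto intro: add_nonneg_pos)
        finally show ?thesis .
      qed
      also have "\<dots> = \<delta>"
      proof -
        have "norm v + norm w + 1 > 0" by (smt (verit) norm_ge_zero)
        then show ?thesis by (simp add: d_def)
      qed
      finally show ?thesis by (subst mem_ball, subst dist_commute) (simp add: dist_norm add.assoc)
    qed
    have inU: "t + r *\<^sub>R v + q *\<^sub>R w \<in> U" if "0 \<le> r" "r \<le> s" "0 \<le> q" "q \<le> s" for r q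
      using inball[OF that] \<delta> by blast
    have step1: "norm (\<phi> (t + r *\<^sub>R v + s *\<^sub>R w) - \<phi> (t + r *\<^sub>R v) - s *\<^sub>R B) \<le> s * e"
      if r: "0 \<le> r" "r \<le> s" for r
    proof -
      define k where "k = (\<lambda>q::real. \<phi> (t + r *\<^sub>R v + q *\<^sub>R w) - q *\<^sub>R B)"
      have kd: "(k has_derivative (\<lambda>h. h *\<^sub>R (frechet_derivative \<phi> (at (t + r *\<^sub>R v + q *\<^sub>R w)) w - B))) (at q)"
        if q: "0 \<le> q" "q \<le> s" for q
      proof -
        let ?x = "t + r *\<^sub>R v + q *\<^sub>R w"
        have "\<phi> differentiable (at ?x)" using dphi inU[OF r q] by (simp add: \<phi>_def)
        then have D: "(\<phi> has_derivative frechet_derivative \<phi> (at ?x)) (at ?x)"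
          by (rule frechet_derivative_works[THEN iffD1])
        have L: "linear (frechet_derivative \<phi> (at ?x))"
          using D has_derivative_linear by blast
        have "((\<lambda>q. t + r *\<^sub>R v + q *\<^sub>R w) has_derivative (\<lambda>h. h *\<^sub>R w)) (at q)"
          by (auto intro!: derivative_eq_intros)
        from has_derivative_compose[OF this D]
        have "((\<lambda>q. \<phi> (t + r *\<^sub>R v + q *\<^sub>R w)) has_derivative (\<lambda>h. frechet_derivative \<phi> (at ?x) (h *\<^sub>R w))) (at q)" .
        then have "(k has_derivative (\<lambda>h. frechet_derivative \<phi> (at ?x) (h *\<^sub>R w) - h *\<^sub>R B)) (at q)"
          unfolding k_def by (auto intro!: derivative_eq_intros)
        moreover have "(\<lambda>h. frechet_derivative \<phi> (at ?x) (h *\<^sub>R w) - h *\<^sub>R B) = (\<lambda>h. h *\<^sub>R (frechet_derivative \<phi> (at ?x) w - B))"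
          using L by (simp add: linear_scale scaleR_diff_right)
        ultimately show ?thesis by simp
      qed
      have "continuous_on {0..s} k"
        by (intro continuous_at_imp_continuous_on ballI) (metis atLeastAtMost_iff kd has_derivative_continuous)
      from mvt_general[OF s(1) this kd]
      obtain q where q: "q \<in> {0<..<s}" "norm (k s - k 0) \<le> norm (s *\<^sub>R (frechet_derivative \<phi> (at (t + r *\<^sub>R v + q *\<^sub>R w)) w - B))"
        by auto
      have "dist (t + r *\<^sub>R v + q *\<^sub>R w) t < \<delta>" using inball[OF r, of q] q(1) by (auto simp: dist_commute)
      then have "norm (frechet_derivative \<phi> (at (t + r *\<^sub>R v + q *\<^sub>R w)) w - B) < e"
        using \<delta>(3) by (simp add: dist_norm)
      then have "norm (k s - k 0) \<le> s * e" using q(2) s(1)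
        by (smt (verit) mult_left_mono norm_scaleR abs_of_pos)
      then show ?thesis by (simp add: k_def algebra_simps)
    qed
    define h where "h = (\<lambda>r::real. f (t + r *\<^sub>R v + s *\<^sub>R w) - f (t + r *\<^sub>R v) - (r * s) *\<^sub>R B)"
    have hd: "(h has_derivative (\<lambda>h. h *\<^sub>R (\<phi> (t + r *\<^sub>R v + s *\<^sub>R w) - \<phi> (t + r *\<^sub>R v) - s *\<^sub>R B))) (at r)"
      if r: "0 \<le> r" "r \<le> s" for r
    proof -
      have gen: "((\<lambda>r. f (t + r *\<^sub>R v + c)) has_derivative (\<lambda>h. h *\<^sub>R \<phi> (t + r *\<^sub>R v + c))) (at r)"
        if "t + r *\<^sub>R v + c \<in> U" for c
      proof -
        let ?x = "t + r *\<^sub>R v + c"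
        have "f differentiable (at ?x)" using df that by simp
        then have D: "(f has_derivative frechet_derivative f (at ?x)) (at ?x)"
          by (rule frechet_derivative_works[THEN iffD1])
        have L: "linear (frechet_derivative f (at ?x))"
          using D has_derivative_linear by blast
        have "((\<lambda>r. t + r *\<^sub>R v + c) has_derivative (\<lambda>h. h *\<^sub>R v)) (at r)"
          by (auto intro!: derivative_eq_intros)
        from has_derivative_compose[OF this D]
        have "((\<lambda>r. f (t + r *\<^sub>R v + c)) has_derivative (\<lambda>h. frechet_derivative f (at ?x) (h *\<^sub>R v))) (at r)" .
        moreover have "(\<lambda>h. frechet_derivative f (at ?x) (h *\<^sub>R v)) = (\<lambda>h. h *\<^sub>R \<phi> ?x)"
          using L by (simp add: linear_scale \<phi>_def)
        ultimately show ?thesis by simp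
      qed
      have g1: "((\<lambda>r. f (t + r *\<^sub>R v + s *\<^sub>R w)) has_derivative (\<lambda>h. h *\<^sub>R \<phi> (t + r *\<^sub>R v + s *\<^sub>R w))) (at r)"
        using gen[of "s *\<^sub>R w"] inU[OF r, of s] s by simp
      have g2: "((\<lambda>r. f (t + r *\<^sub>R v)) has_derivative (\<lambda>h. h *\<^sub>R \<phi> (t + r *\<^sub>R v))) (at r)"
        using gen[of 0] inU[OF r, of 0] s by simp
      have "(h has_derivative (\<lambda>h. h *\<^sub>R \<phi> (t + r *\<^sub>R v + s *\<^sub>R w) - h *\<^sub>R \<phi> (t + r *\<^sub>R v) - (h * s) *\<^sub>R B)) (at r)"
        unfolding h_def by (intro has_derivative_diff g1 g2) (auto intro!: derivative_eq_intros)
      moreover have "(\<lambda>h. h *\<^sub>R \<phi> (t + r *\<^sub>R v + s *\<^sub>R w) - h *\<^sub>R \<phi> (t + r *\<^sub>R v) - (h * s) *\<^sub>R B)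
         = (\<lambda>h. h *\<^sub>R (\<phi> (t + r *\<^sub>R v + s *\<^sub>R w) - \<phi> (t + r *\<^sub>R v) - s *\<^sub>R B))"
        by (simp add: scaleR_diff_right)
      ultimately show ?thesis by simp
    qed
    have "continuous_on {0..s} h"
      by (intro continuous_at_imp_continuous_on ballI) (metis atLeastAtMost_iff hd has_derivative_continuous)
    from mvt_general[OF s(1) this hd]
    obtain r where r: "r \<in> {0<..<s}" "norm (h s - h 0) \<le> norm (s *\<^sub>R (\<phi> (t + r *\<^sub>R v + s *\<^sub>R w) - \<phi> (t + r *\<^sub>R v) - s *\<^sub>R B))"
      by auto
    have "norm (h s - h 0) \<le> s * (s * e)"
      using r step1[of r] s(1) by (smt (verit) mult_left_mono norm_scaleR abs_of_pos greaterThanLessThan_iff)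
    moreover have "h s - h 0 = f (t + s *\<^sub>R v + s *\<^sub>R w) - f (t + s *\<^sub>R v) - f (t + s *\<^sub>R w) + f t - (s^2) *\<^sub>R B"
      by (simp add: h_def power2_eq_square)
    ultimately show "norm (f (t + s *\<^sub>R v + s *\<^sub>R w) - f (t + s *\<^sub>R v) - f (t + s *\<^sub>R w) + f t
           - (s^2) *\<^sub>R frechet_derivative (\<lambda>y. frechet_derivative f (at y) v) (at t) w) \<le> e * s^2"
      by (simp add: B_def \<phi>_def power2_eq_square mult.commute mult.left_commute)
  qed
qed



lemma schwarz:
  fixes f :: "'a::real_normed_vector \<Rightarrow> complex"
  assumes U: "open U" "t \<in> U"
    and df: "\<forall>x\<in>U. f differentiable (at x)"
    and dv: "\<forall>x\<in>U. (\<lambda>y. frechet_derivative f (at y) v) differentiable (at x)"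
    and dw: "\<forall>x\<in>U. (\<lambda>y. frechet_derivative f (at y) w) differentiable (at x)"
    and cv: "continuous (at t) (\<lambda>x. frechet_derivative (\<lambda>y. frechet_derivative f (at y) v) (at x) w)"
    and cw: "continuous (at t) (\<lambda>x. frechet_derivative (\<lambda>y. frechet_derivative f (at y) w) (at x) v)"
  shows "frechet_derivative (\<lambda>y. frechet_derivative f (at y) v) (at t) w
       = frechet_derivative (\<lambda>y. frechet_derivative f (at y) w) (at t) v"
proof (rule ccontr)
  define B1 where "B1 = frechet_derivative (\<lambda>y. frechet_derivative f (at y) v) (at t) w"
  define B2 where "B2 = frechet_derivative (\<lambda>y. frechet_derivative f (at y) w) (at t) v"
  assume "\<not> ?thesis"
  then have ne: "norm (B1 - B2) > 0" by (simp add: B1_def B2_def)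
  define e where "e = norm (B1 - B2) / 4"
  have e: "e > 0" using ne by (simp add: e_def)
  obtain d1 where d1: "d1 > 0" "\<forall>s. 0 < s \<longrightarrow> s < d1 \<longrightarrow> norm (f (t + s *\<^sub>R v + s *\<^sub>R w) - f (t + s *\<^sub>R v) - f (t + s *\<^sub>R w) + f t
           - (s^2) *\<^sub>R B1) \<le> e * s^2"
    using schwarz_half[OF U df dv cv e] unfolding B1_def by blast
  obtain d2 where d2: "d2 > 0" "\<forall>s. 0 < s \<longrightarrow> s < d2 \<longrightarrow> norm (f (t + s *\<^sub>R w + s *\<^sub>R v) - f (t + s *\<^sub>R w) - f (t + s *\<^sub>R v) + f t
           - (s^2) *\<^sub>R B2) \<le> e * s^2"
    using schwarz_half[OF U df dw cw e] unfolding B2_def by blast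
  define s where "s = min d1 d2 / 2"
  have s: "0 < s" "s < d1" "s < d2" using d1 d2 by (auto simp: s_def)
  define \<Delta> where "\<Delta> = f (t + s *\<^sub>R v + s *\<^sub>R w) - f (t + s *\<^sub>R v) - f (t + s *\<^sub>R w) + f t"
  have eqp: "t + s *\<^sub>R w + s *\<^sub>R v = t + s *\<^sub>R v + s *\<^sub>R w" by (simp add: algebra_simps)
  have h1: "norm (\<Delta> - (s^2) *\<^sub>R B1) \<le> e * s^2"
    using d1(2) s(1,2) unfolding \<Delta>_def by blast
  have eq2: "\<Delta> - (s^2) *\<^sub>R B2 = f (t + s *\<^sub>R w + s *\<^sub>R v) - f (t + s *\<^sub>R w) - f (t + s *\<^sub>R v) + f t - (s^2) *\<^sub>R B2"
    unfolding \<Delta>_def eqp by (simp add: algebra_simps)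
  have h2: "norm (\<Delta> - (s^2) *\<^sub>R B2) \<le> e * s^2"
    unfolding eq2 using d2(2) s(1,3) by blast
  have eq: "(s^2) *\<^sub>R (B1 - B2) = (\<Delta> - (s^2) *\<^sub>R B2) - (\<Delta> - (s^2) *\<^sub>R B1)"
    by (simp add: algebra_simps)
  have "norm ((s^2) *\<^sub>R (B1 - B2)) \<le> norm (\<Delta> - (s^2) *\<^sub>R B2) + norm (\<Delta> - (s^2) *\<^sub>R B1)"
    unfolding eq by (rule norm_triangle_ineq4)
  also have "\<dots> \<le> 2 * e * s^2" using h1 h2 by simp
  finally have "s^2 * norm (B1 - B2) \<le> s^2 * (norm (B1 - B2) / 2)" by (simp add: e_def)
  then have "norm (B1 - B2) \<le> norm (B1 - B2) / 2" using s by (simp add: mult_le_cancel_left)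
  then show False using ne by simp
qed



lemma fd_eq: "(f has_derivative f') (at t) \<Longrightarrow> frechet_derivative f (at t) v = f' v"
  by (metis frechet_derivative_at)

lemma fd_works: "f differentiable (at t) \<Longrightarrow> (f has_derivative frechet_derivative f (at t)) (at t)"
  using frechet_derivative_works by blast

lemma fd_local:
  assumes "open U" "t \<in> U" "\<forall>s\<in>U. f s = g s"
  shows "frechet_derivative f (at t) = frechet_derivative g (at t)"
proof -
  have "\<And>f'. (f has_derivative f') (at t) \<longleftrightarrow> (g has_derivative f') (at t)"
    using assms has_derivative_transform_within_open[of _ _ t UNIV U] by (metis (no_types))
  then show ?thesis unfolding frechet_derivative_def by simp
qed

lemma diff_local:
  assumes "open U" "t \<in> U" "\<forall>s\<in>U. f s = g s"
  shows "f differentiable (at t) \<longleftrightarrow> g differentiable (at t)"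
  using assms has_derivative_transform_within_open[of _ _ t UNIV U] unfolding differentiable_def
  by (metis (no_types))

context
  fixes t :: "'a::real_normed_vector"
begin

lemma fd_add: "f differentiable (at t) \<Longrightarrow> g differentiable (at t) \<Longrightarrow>
  frechet_derivative (\<lambda>s. f s + g s) (at t) v = frechet_derivative f (at t) v + frechet_derivative g (at t) v"
  by (rule fd_eq[OF has_derivative_add[OF fd_works fd_works]])

lemma fd_diff: "f differentiable (at t) \<Longrightarrow> g differentiable (at t) \<Longrightarrow>
  frechet_derivative (\<lambda>s. f s - g s) (at t) v = frechet_derivative f (at t) v - frechet_derivative g (at t) v"
  by (rule fd_eq[OF has_derivative_diff[OF fd_works fd_works]])

lemma fd_mult: fixes f g :: "'a \<Rightarrow> complex" shows "f differentiable (at t) \<Longrightarrow> g differentiable (at t) \<Longrightarrow>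
  frechet_derivative (\<lambda>s. f s * g s) (at t) v = f t * frechet_derivative g (at t) v + frechet_derivative f (at t) v * g t"
  by (rule fd_eq[OF has_derivative_mult[OF fd_works fd_works]])

lemma fd_cmult: fixes f :: "'a \<Rightarrow> complex" shows "f differentiable (at t) \<Longrightarrow>
  frechet_derivative (\<lambda>s. c * f s) (at t) v = c * frechet_derivative f (at t) v"
  by (rule fd_eq[OF has_derivative_mult_right[OF fd_works]])

lemma fd_cnj: fixes f :: "'a \<Rightarrow> complex" shows "f differentiable (at t) \<Longrightarrow>
  frechet_derivative (\<lambda>s. cnj (f s)) (at t) v = cnj (frechet_derivative f (at t) v)"
  by (rule fd_eq[OF has_derivative_cnj[OF fd_works]])

lemma fd_const: "frechet_derivative (\<lambda>s. c) (at t) v = 0"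
  by (rule fd_eq[OF has_derivative_const])

lemma fd_sum: "finite I \<Longrightarrow> (\<And>i. i \<in> I \<Longrightarrow> f i differentiable (at t)) \<Longrightarrow>
  frechet_derivative (\<lambda>s. \<Sum>i\<in>I. f i s) (at t) v = (\<Sum>i\<in>I. frechet_derivative (f i) (at t) v)"
  by (rule fd_eq[OF has_derivative_sum[OF fd_works]]) auto

end

context
  fixes t :: "complex^'n"
begin

lemma wirt_add: "f differentiable (at t) \<Longrightarrow> g differentiable (at t) \<Longrightarrow>
  wirt (\<lambda>s. f s + g s) j t = wirt f j t + wirt g j t"
  by (simp add: wirt_def fd_add algebra_simps add_divide_distrib[symmetric])

lemma wirt_diff: "f differentiable (at t) \<Longrightarrow> g differentiable (at t) \<Longrightarrow>
  wirt (\<lambda>s. f s - g s) j t = wirt f j t - wirt g j t"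
  by (simp add: wirt_def fd_diff algebra_simps diff_divide_distrib[symmetric])

lemma wirt_mult: "f differentiable (at t) \<Longrightarrow> g differentiable (at t) \<Longrightarrow>
  wirt (\<lambda>s. f s * g s) j t = wirt f j t * g t + f t * wirt g j t"
  by (simp add: wirt_def fd_mult algebra_simps add_divide_distrib[symmetric] diff_divide_distrib[symmetric])

lemma wirt_const: "wirt (\<lambda>s. c) j t = 0"
  by (simp add: wirt_def fd_const)

lemma wirt_sum: "finite I \<Longrightarrow> (\<And>i. i \<in> I \<Longrightarrow> f i differentiable (at t)) \<Longrightarrow>
  wirt (\<lambda>s. \<Sum>i\<in>I. f i s) j t = (\<Sum>i\<in>I. wirt (f i) j t)"
  by (simp add: wirt_def fd_sum sum_divide_distrib[symmetric] sum_subtractf sum_distrib_left)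

lemma wirt_cnj: "f differentiable (at t) \<Longrightarrow> wirt (\<lambda>s. cnj (f s)) j t = cnj (wirtbar f j t)"
  by (simp add: wirt_def wirtbar_def fd_cnj)

lemma wirtbar_cnj: "f differentiable (at t) \<Longrightarrow> wirtbar (\<lambda>s. cnj (f s)) j t = cnj (wirt f j t)"
  by (simp add: wirt_def wirtbar_def fd_cnj)

lemma wirt_local: "open U \<Longrightarrow> t \<in> U \<Longrightarrow> \<forall>s\<in>U. f s = g s \<Longrightarrow> wirt f j t = wirt g j t"
  unfolding wirt_def using fd_local[of U t f g] by simp

lemma wirtbar_local: "open U \<Longrightarrow> t \<in> U \<Longrightarrow> \<forall>s\<in>U. f s = g s \<Longrightarrow> wirtbar f j t = wirtbar g j t"
  unfolding wirtbar_def using fd_local[of U t f g] by simp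

lemma axis_i: "axis j \<i> = \<i> *s (axis j 1 :: complex^'n)"
  by (simp add: vec_eq_iff axis_def)

lemma holo_wirtbar: "holo_on U f \<Longrightarrow> t \<in> U \<Longrightarrow> wirtbar f j t = 0"
  unfolding holo_on_def wirtbar_def axis_i by simp

end

definition mdiff :: "('a::real_normed_vector \<Rightarrow> complex^'r^'c) \<Rightarrow> 'a \<Rightarrow> bool" where
  "mdiff F t \<longleftrightarrow> (\<forall>a b. (\<lambda>s. F s $ a $ b) differentiable (at t))"

definition mwirtbar :: "(complex^'n \<Rightarrow> complex^'r^'r) \<Rightarrow> 'n \<Rightarrow> complex^'n \<Rightarrow> complex^'r^'r" where
  "mwirtbar F j t = (\<chi> a b. wirtbar (\<lambda>s. F s $ a $ b) j t)"

lemma mdiff_mult: "mdiff F t \<Longrightarrow> mdiff H t \<Longrightarrow> mdiff (\<lambda>s. F s ** H s) t"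
  unfolding mdiff_def matrix_matrix_mult_def by (simp add: differentiable_sum)

lemma mdiff_add: "mdiff F t \<Longrightarrow> mdiff H t \<Longrightarrow> mdiff (\<lambda>s. F s + H s) t"
  unfolding mdiff_def by simp

lemma mdiff_cadj: "mdiff F t \<Longrightarrow> mdiff (\<lambda>s. cadj (F s)) t"
  unfolding mdiff_def cadj_def by (simp add: differentiable_cnj_iff)

lemma mdiff_const: "mdiff (\<lambda>s. c) t"
  unfolding mdiff_def by simp

lemma mwirt_mult:
  fixes F :: "complex^'n \<Rightarrow> complex^'r^'r"
  assumes "mdiff F t" "mdiff H t"
  shows "mwirt (\<lambda>s. F s ** H s) j t = mwirt F j t ** H t + F t ** mwirt H j t"
proof -
  have "wirt (\<lambda>s. \<Sum>c\<in>UNIV. F s $ a $ c * H s $ c $ b) j t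
      = (\<Sum>c\<in>UNIV. wirt (\<lambda>s. F s $ a $ c) j t * H t $ c $ b + F t $ a $ c * wirt (\<lambda>s. H s $ c $ b) j t)" for a b
    using assms unfolding mdiff_def
    by (subst wirt_sum) (auto simp: wirt_mult)
  then show ?thesis
    unfolding mwirt_def matrix_matrix_mult_def by (simp add: vec_eq_iff sum.distrib)
qed

lemma mwirt_const: "mwirt (\<lambda>s. c) j t = 0"
  unfolding mwirt_def by (simp add: wirt_const vec_eq_iff)

lemma mwirt_local: "open U \<Longrightarrow> t \<in> U \<Longrightarrow> \<forall>s\<in>U. F s = H s \<Longrightarrow> mwirt F j t = mwirt H j t"
  unfolding mwirt_def by (simp add: vec_eq_iff wirt_local[of U t])

lemma wirt_trace:
  fixes F :: "complex^'n \<Rightarrow> complex^'r^'r"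
  assumes "mdiff F t"
  shows "wirt (\<lambda>s. trace (F s)) j t = trace (mwirt F j t)"
  using assms unfolding mdiff_def trace_def mwirt_def by (subst wirt_sum) auto

lemma diff_trace:
  fixes F :: "complex^'n \<Rightarrow> complex^'r^'r"
  assumes "mdiff F t"
  shows "(\<lambda>s. trace (F s)) differentiable (at t)"
  using assms unfolding mdiff_def trace_def by (simp add: differentiable_sum)

lemma mwirt_cadj:
  fixes F :: "complex^'n \<Rightarrow> complex^'r^'r"
  assumes "mdiff F t"
  shows "mwirt (\<lambda>s. cadj (F s)) j t = cadj (mwirtbar F j t)"
  using assms unfolding mdiff_def cadj_def mwirt_def mwirtbar_def by (simp add: vec_eq_iff wirt_cnj)



lemma inv_props:
  fixes A :: "'a::field^'r^'r"
  assumes "invertible A"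
  shows "A ** matrix_inv A = mat 1" "matrix_inv A ** A = mat 1"
  using someI_ex[OF assms[unfolded invertible_def]] unfolding matrix_inv_def by auto

lemma posdef_invertible:
  fixes A :: "complex^'r^'r"
  assumes "\<forall>v::complex^'r. v \<noteq> 0 \<longrightarrow> 0 < Re (\<Sum>a\<in>UNIV. \<Sum>b\<in>UNIV. cnj (v $ a) * A $ a $ b * v $ b)"
  shows "invertible A"
proof -
  have "\<forall>x. A *v x = 0 \<longrightarrow> x = 0"
  proof (intro allI impI)
    fix x assume ax: "A *v x = 0"
    have "(\<Sum>a\<in>UNIV. \<Sum>b\<in>UNIV. cnj (x $ a) * A $ a $ b * x $ b) = (\<Sum>a\<in>UNIV. cnj (x $ a) * (A *v x) $ a)"
      by (simp add: matrix_vector_mult_def sum_distrib_left mult.assoc)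
    also have "\<dots> = 0" using ax by simp
    finally have s0: "(\<Sum>a\<in>UNIV. \<Sum>b\<in>UNIV. cnj (x $ a) * A $ a $ b * x $ b) = 0" .
    show "x = 0"
    proof (rule ccontr)
      assume "x \<noteq> 0"
      then have "0 < Re (\<Sum>a\<in>UNIV. \<Sum>b\<in>UNIV. cnj (x $ a) * A $ a $ b * x $ b)" using assms by blast
      then show False using s0 by simp
    qed
  qed
  then show ?thesis
    using invertible_left_inverse matrix_left_invertible_ker by blast
qed

lemma cadj_mult: "cadj (A ** B) = cadj B ** cadj (A :: complex^'r^'r)"
  by (simp add: cadj_def matrix_matrix_mult_def vec_eq_iff mult.commute)

lemma cadj_cadj: "cadj (cadj A) = A"
  by (simp add: cadj_def vec_eq_iff)

lemma cadj_mat1: "cadj (mat 1 :: complex^'r^'r) = mat 1"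
  by (simp add: cadj_def mat_def vec_eq_iff)

lemma trace_cadj: "trace (cadj A) = cnj (trace (A :: complex^'r^'r))"
  by (simp add: cadj_def trace_def)

lemma cadj_inv:
  fixes A :: "complex^'r^'r"
  assumes "cadj A = A" "invertible A"
  shows "cadj (matrix_inv A) = matrix_inv A"
proof -
  have c1: "cadj (matrix_inv A) ** A = mat 1"
  proof -
    have "cadj (matrix_inv A) ** A = cadj (matrix_inv A) ** cadj A" using assms(1) by simp
    also have "\<dots> = cadj (A ** matrix_inv A)" by (simp add: cadj_mult)
    also have "\<dots> = mat 1" by (simp add: inv_props(1)[OF assms(2)] cadj_mat1)
    finally show ?thesis .
  qed
  have "cadj (matrix_inv A) = cadj (matrix_inv A) ** (A ** matrix_inv A)"
    by (simp add: inv_props(1)[OF assms(2)])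
  also have "\<dots> = (cadj (matrix_inv A) ** A) ** matrix_inv A" by (simp add: matrix_mul_assoc)
  also have "\<dots> = matrix_inv A" by (simp add: c1)
  finally show ?thesis .
qed

lemma inv_entry:
  fixes A :: "complex^'r^'r"
  assumes "det A \<noteq> 0"
  shows "matrix_inv A $ a $ b = det (\<chi> i j. if j = a then axis b 1 $ i else A $ i $ j) / det A"
proof -
  have inv: "invertible A" using assms invertible_det_nz by blast
  define x where "x = matrix_inv A *v axis b 1"
  have "A *v x = axis b 1"
    unfolding x_def by (simp add: matrix_vector_mul_assoc inv_props[OF inv])
  then have "x = (\<chi> k. det (\<chi> i j. if j = k then axis b 1 $ i else A $ i $ j) / det A)"
    using cramer[OF assms] by blast
  then have "x $ a = det (\<chi> i j. if j = a then axis b 1 $ i else A $ i $ j) / det A" by simp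
  moreover have "x $ a = matrix_inv A $ a $ b"
  proof -
    have "\<And>j. matrix_inv A $ a $ j * (if j = b then 1 else 0) = (if j = b then matrix_inv A $ a $ j else 0)"
      by simp
    then show ?thesis unfolding x_def matrix_vector_mult_def axis_def by (simp add: sum.delta)
  qed
  ultimately show ?thesis by simp
qed

lemma differentiable_prod':
  fixes f :: "'i \<Rightarrow> 'a::real_normed_vector \<Rightarrow> complex"
  assumes "\<And>i. i \<in> I \<Longrightarrow> f i differentiable (at t)"
  shows "(\<lambda>x. \<Prod>i\<in>I. f i x) differentiable (at t)"
  using has_derivative_prod[of I f "\<lambda>i. frechet_derivative (f i) (at t)" t UNIV] assms fd_works
  unfolding differentiable_def by blast

lemma diff_det:
  fixes M :: "'a::real_normed_vector \<Rightarrow> complex^'r^'r"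
  assumes "mdiff M t"
  shows "(\<lambda>s. det (M s)) differentiable (at t)"
  unfolding det_def
  by (intro differentiable_sum ballI differentiable_mult differentiable_const differentiable_prod' finite_permutations)
     (use assms in \<open>auto simp: mdiff_def\<close>)

lemma smooth_facts:
  assumes "smooth_on U f" "x \<in> U"
  shows "f differentiable (at x)"
    and "(\<lambda>y. frechet_derivative f (at y) v) differentiable (at x)"
    and "(\<lambda>z. frechet_derivative (\<lambda>y. frechet_derivative f (at y) v) (at z) w) differentiable (at x)"
proof -
  have e1: "iter_pd [] f = f" and e2: "iter_pd [v] f = (\<lambda>y. frechet_derivative f (at y) v)"
    and e3: "iter_pd [w, v] f = (\<lambda>z. frechet_derivative (\<lambda>y. frechet_derivative f (at y) v) (at z) w)"
    by simp_all
  have all: "\<forall>vs. iter_pd vs f differentiable (at x)" using assms unfolding smooth_on_def by blast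
  show "f differentiable (at x)" using all[rule_format, of "[]"] by (simp only: e1)
  show "(\<lambda>y. frechet_derivative f (at y) v) differentiable (at x)" using all[rule_format, of "[v]"] by (simp only: e2)
  show "(\<lambda>z. frechet_derivative (\<lambda>y. frechet_derivative f (at y) v) (at z) w) differentiable (at x)"
    using all[rule_format, of "[w, v]"] by (simp only: e3)
qed



lemma mm_neg_left: "(- A) ** B = - (A ** (B::complex^'r^'r))"
  by (simp add: matrix_matrix_mult_def vec_eq_iff sum_negf)

lemma mm_neg_right: "A ** (- B) = - (A ** (B::complex^'r^'r))"
  by (simp add: matrix_matrix_mult_def vec_eq_iff sum_negf)

lemma mm_diff_left: "(A - B) ** C = A ** C - B ** (C::complex^'r^'r)"
  by (simp add: matrix_matrix_mult_def vec_eq_iff sum_subtractf left_diff_distrib)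

lemma mm_diff_right: "C ** (A - B) = C ** A - C ** (B::complex^'r^'r)"
  by (simp add: matrix_matrix_mult_def vec_eq_iff sum_subtractf right_diff_distrib)

lemma mm_add_left: "(A + B) ** C = A ** C + B ** (C::complex^'r^'r)"
  by (simp add: matrix_matrix_mult_def vec_eq_iff sum.distrib distrib_right)

lemma herm_facts:
  assumes "herm_metric U G" "s \<in> U"
  shows "invertible (G s)" "cadj (G s) = G s" "det (G s) \<noteq> 0"
    "G s ** matrix_inv (G s) = mat 1" "matrix_inv (G s) ** G s = mat 1"
    "cadj (matrix_inv (G s)) = matrix_inv (G s)"
proof -
  show inv: "invertible (G s)" using assms unfolding herm_metric_def by (blast intro: posdef_invertible)
  show c: "cadj (G s) = G s" using assms unfolding herm_metric_def by blast
  show "det (G s) \<noteq> 0" using inv invertible_det_nz by blast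
  show "G s ** matrix_inv (G s) = mat 1" "matrix_inv (G s) ** G s = mat 1" using inv_props[OF inv] by auto
  show "cadj (matrix_inv (G s)) = matrix_inv (G s)" using cadj_inv[OF c inv] .
qed

lemma G_smooth: "herm_metric U G \<Longrightarrow> smooth_on U (\<lambda>s. G s $ a $ b)"
  unfolding herm_metric_def by blast

lemma mdiff_G: "herm_metric U G \<Longrightarrow> t \<in> U \<Longrightarrow> mdiff G t"
  unfolding mdiff_def using G_smooth smooth_facts(1) by blast

lemma mdiff_inv:
  assumes "herm_metric U G" "open U" "t \<in> U"
  shows "mdiff (\<lambda>s. matrix_inv (G s)) t"
  unfolding mdiff_def
proof (intro allI)
  fix a b
  define F where "F s = det (\<chi> i j. if j = a then axis b 1 $ i else G s $ i $ j) / det (G s)" for s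
  have eq: "\<forall>s\<in>U. F s = matrix_inv (G s) $ a $ b"
  proof
    fix s assume "s \<in> U"
    show "F s = matrix_inv (G s) $ a $ b"
      unfolding F_def by (rule inv_entry[OF herm_facts(3)[OF assms(1) \<open>s \<in> U\<close>], symmetric])
  qed
  have md: "mdiff (\<lambda>s. \<chi> i j. if j = a then axis b 1 $ i else G s $ i $ j) t"
    unfolding mdiff_def
  proof (intro allI)
    fix a' b'
    show "(\<lambda>s. (\<chi> i j. if j = a then axis b 1 $ i else G s $ i $ j) $ a' $ b') differentiable (at t)"
    proof (cases "b' = a")
      case True then show ?thesis by simp
    next
      case False then show ?thesis using mdiff_G[OF assms(1,3)] unfolding mdiff_def by simp
    qed
  qed
  have "F differentiable (at t)"
    unfolding F_def
    by (intro differentiable_divide diff_det md mdiff_G[OF assms(1,3)] herm_facts(3)[OF assms(1,3)])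
  then show "(\<lambda>s. matrix_inv (G s) $ a $ b) differentiable (at t)"
    using diff_local[OF assms(2,3) eq] by simp
qed

lemma fd_half: fixes f :: "'a::real_normed_vector \<Rightarrow> complex"
  assumes "f differentiable (at t)" "g differentiable (at t)"
  shows "frechet_derivative (\<lambda>s. (f s - \<i> * g s) / 2) (at t) w
       = (frechet_derivative f (at t) w - \<i> * frechet_derivative g (at t) w) / 2"
proof -
  have "((\<lambda>s. (f s - \<i> * g s) / 2) has_derivative
     (\<lambda>h. (frechet_derivative f (at t) h - \<i> * frechet_derivative g (at t) h) / 2)) (at t)"
    by (rule bounded_linear.has_derivative[OF bounded_linear_divide[of 2]
          has_derivative_diff[OF fd_works[OF assms(1)] has_derivative_mult_right[OF fd_works[OF assms(2)]]]])
  then show ?thesis by (rule fd_eq)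
qed

lemma diff_half: fixes f :: "'a::real_normed_vector \<Rightarrow> complex"
  assumes "f differentiable (at t)" "g differentiable (at t)"
  shows "(\<lambda>s. (f s - \<i> * g s) / 2) differentiable (at t)"
  using assms by simp

lemma wirt_fun: "(\<lambda>s. wirt f j s) = (\<lambda>s. (frechet_derivative f (at s) (axis j 1) - \<i> * frechet_derivative f (at s) (axis j \<i>)) / 2)"
  by (simp add: wirt_def fun_eq_iff)

lemma wirt_wirt_sym:
  fixes f :: "complex^'n \<Rightarrow> complex"
  assumes sm: "smooth_on U f" and U: "open U" "t \<in> U"
  shows "wirt (\<lambda>s. wirt f j s) l t = wirt (\<lambda>s. wirt f l s) j t"
proof -
  have d\<phi>: "(\<lambda>y. frechet_derivative f (at y) v) differentiable (at t)" for v
    using smooth_facts(2)[OF sm U(2)] .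
  have sym: "frechet_derivative (\<lambda>y. frechet_derivative f (at y) v) (at t) w
           = frechet_derivative (\<lambda>y. frechet_derivative f (at y) w) (at t) v" for v w
  proof (rule schwarz[OF U])
    show "\<forall>x\<in>U. f differentiable (at x)" using smooth_facts(1)[OF sm] by blast
    show "\<forall>x\<in>U. (\<lambda>y. frechet_derivative f (at y) v) differentiable (at x)" using smooth_facts(2)[OF sm] by blast
    show "\<forall>x\<in>U. (\<lambda>y. frechet_derivative f (at y) w) differentiable (at x)" using smooth_facts(2)[OF sm] by blast
    show "isCont (\<lambda>x. frechet_derivative (\<lambda>y. frechet_derivative f (at y) v) (at x) w) t"
      using smooth_facts(3)[OF sm U(2)] differentiable_imp_continuous_within by blast
    show "isCont (\<lambda>x. frechet_derivative (\<lambda>y. frechet_derivative f (at y) w) (at x) v) t"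
      using smooth_facts(3)[OF sm U(2)] differentiable_imp_continuous_within by blast
  qed
  have W: "wirt (\<lambda>s. wirt f j s) l t =
    ((frechet_derivative (\<lambda>y. frechet_derivative f (at y) (axis j 1)) (at t) (axis l 1) - \<i> * frechet_derivative (\<lambda>y. frechet_derivative f (at y) (axis j \<i>)) (at t) (axis l 1)) / 2
     - \<i> * ((frechet_derivative (\<lambda>y. frechet_derivative f (at y) (axis j 1)) (at t) (axis l \<i>) - \<i> * frechet_derivative (\<lambda>y. frechet_derivative f (at y) (axis j \<i>)) (at t) (axis l \<i>)) / 2)) / 2"
    for j l
    unfolding wirt_fun[of f j] wirt_def
    by (simp only: fd_half[OF d\<phi>[of "axis j 1"] d\<phi>[of "axis j \<i>"]])
  have alg: "((A - \<i> * C)/2 - \<i> * ((B - \<i> * D)/2))/2 = ((A - \<i>*B)/2 - \<i> * ((C - \<i>*D)/2))/2" for A B C D :: complex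
    by (simp add: diff_divide_distrib right_diff_distrib add_divide_distrib algebra_simps)
  show ?thesis unfolding W[of j l] W[of l j]
    unfolding sym[of "axis j 1" "axis l 1"] sym[of "axis j \<i>" "axis l 1"] sym[of "axis j 1" "axis l \<i>"] sym[of "axis j \<i>" "axis l \<i>"]
    by (rule alg)
qed

lemma mdiff_mwirt:
  assumes "herm_metric U G" "t \<in> U"
  shows "mdiff (\<lambda>s. mwirt G j s) t"
  unfolding mdiff_def mwirt_def wirt_fun[symmetric]
proof (intro allI)
  fix a b
  have sm: "smooth_on U (\<lambda>s. G s $ a $ b)" using G_smooth[OF assms(1)] .
  show "(\<lambda>s. (\<chi> a b. wirt (\<lambda>s. G s $ a $ b) j s) $ a $ b) differentiable (at t)"
    unfolding vec_lambda_beta wirt_fun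
    by (intro diff_half smooth_facts(2)[OF sm assms(2)])
qed

lemma mG_sym:
  assumes "herm_metric U G" "open U" "t \<in> U"
  shows "mwirt (mwirt G j) l t = mwirt (mwirt G l) j t"
proof -
  have *: "wirt (\<lambda>s. mwirt G j s $ a $ b) l t = wirt (\<lambda>s. mwirt G l s $ a $ b) j t" for a b
    unfolding mwirt_def vec_lambda_beta by (rule wirt_wirt_sym[OF G_smooth[OF assms(1)] assms(2,3)])
  show ?thesis
    unfolding mwirt_def[of "mwirt G j"] mwirt_def[of "mwirt G l"] vec_eq_iff vec_lambda_beta using * by blast
qed

lemma P_deriv:
  assumes "herm_metric U G" "open U" "t \<in> U"
  shows "mwirt (\<lambda>s. matrix_inv (G s)) l t = - (matrix_inv (G t) ** mwirt G l t ** matrix_inv (G t))"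
proof -
  define X where "X = mwirt (\<lambda>s. matrix_inv (G s)) l t"
  have "mwirt (\<lambda>s. matrix_inv (G s) ** G s) l t = mwirt (\<lambda>s. mat 1) l t"
    using herm_facts(5)[OF assms(1)] by (intro mwirt_local[OF assms(2,3)]) auto
  also have "\<dots> = 0" by (rule mwirt_const)
  finally have "X ** G t + matrix_inv (G t) ** mwirt G l t = 0"
    unfolding X_def by (subst (asm) mwirt_mult[OF mdiff_inv[OF assms] mdiff_G[OF assms(1,3)]])
  then have XG: "X ** G t = - (matrix_inv (G t) ** mwirt G l t)"
    by (simp add: eq_neg_iff_add_eq_0)
  have "X = X ** (G t ** matrix_inv (G t))" using herm_facts(4)[OF assms(1,3)] by simp
  also have "\<dots> = (X ** G t) ** matrix_inv (G t)" by (simp add: matrix_mul_assoc)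
  also have "\<dots> = - (matrix_inv (G t) ** mwirt G l t ** matrix_inv (G t))"
    unfolding XG mm_neg_left ..
  finally show ?thesis unfolding X_def .
qed



lemma trace_neg: "trace (- A) = - trace (A :: complex^'r^'r)"
  by (simp add: trace_def sum_negf)

lemma theta_facts:
  fixes \<theta> :: "'n \<Rightarrow> complex^'n \<Rightarrow> complex^'r^'r"
  assumes "higgs_field U \<theta>" "t \<in> U"
  shows "mdiff (\<theta> j) t" "mdiff (\<lambda>s. cadj (\<theta> j s)) t" "mwirt (\<lambda>s. cadj (\<theta> j s)) l t = 0"
proof -
  have h: "holo_on U (\<lambda>t. \<theta> j t $ a $ b)" for a b using assms(1) unfolding higgs_field_def by blast
  show md: "mdiff (\<theta> j) t" unfolding mdiff_def using h assms(2) unfolding holo_on_def by blast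
  show "mdiff (\<lambda>s. cadj (\<theta> j s)) t" using mdiff_cadj[OF md] .
  have "mwirtbar (\<theta> j) l t = 0"
    unfolding mwirtbar_def using holo_wirtbar[OF h assms(2)] by (simp add: vec_eq_iff)
  then show "mwirt (\<lambda>s. cadj (\<theta> j s)) l t = 0"
    using mwirt_cadj[OF md] by (simp add: cadj_def vec_eq_iff)
qed

lemma chern_fun: "chern_conn G j = (\<lambda>s. matrix_inv (G s) ** mwirt G j s)"
  by (simp add: fun_eq_iff chern_conn_def)

lemma chern_zero:
  assumes "herm_metric U G" "open U" "t \<in> U"
  shows "mwirt (chern_conn G j) l t - mwirt (chern_conn G l) j t
       + (chern_conn G l t ** chern_conn G j t - chern_conn G j t ** chern_conn G l t) = 0"
proof -
  have D: "mwirt (chern_conn G j) l t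
      = - ((matrix_inv (G t) ** mwirt G l t) ** (matrix_inv (G t) ** mwirt G j t))
        + matrix_inv (G t) ** mwirt (mwirt G j) l t" for j l
  proof -
    have "mwirt (chern_conn G j) l t = mwirt (\<lambda>s. matrix_inv (G s)) l t ** mwirt G j t
        + matrix_inv (G t) ** mwirt (mwirt G j) l t"
      unfolding chern_fun by (rule mwirt_mult[OF mdiff_inv[OF assms] mdiff_mwirt[OF assms(1,3)]])
    also have "\<dots> = - ((matrix_inv (G t) ** mwirt G l t) ** (matrix_inv (G t) ** mwirt G j t))
        + matrix_inv (G t) ** mwirt (mwirt G j) l t"
      unfolding P_deriv[OF assms] mm_neg_left by (simp add: matrix_mul_assoc)
    finally show ?thesis .
  qed
  show ?thesis unfolding D[of j l] D[of l j] mG_sym[OF assms, of j l]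
    by (simp add: chern_conn_def)
qed

lemma hodge_fun: "hodge_coeff G \<theta> j k = (\<lambda>s. trace (\<theta> j s ** (matrix_inv (G s) ** cadj (\<theta> k s) ** G s)))"
  by (simp add: fun_eq_iff hodge_coeff_def end_ip_def hadj_def)

lemma hodge_diff:
  assumes "herm_metric U G" "open U" "t \<in> U" "higgs_field U \<theta>"
  shows "hodge_coeff G \<theta> j k differentiable (at t)"
    "mdiff (\<lambda>s. \<theta> j s ** (matrix_inv (G s) ** cadj (\<theta> k s) ** G s)) t"
proof -
  show md: "mdiff (\<lambda>s. \<theta> j s ** (matrix_inv (G s) ** cadj (\<theta> k s) ** G s)) t"
    by (intro mdiff_mult theta_facts[OF assms(4,3)] mdiff_inv[OF assms(1-3)] mdiff_G[OF assms(1,3)])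
  show "hodge_coeff G \<theta> j k differentiable (at t)"
    unfolding hodge_fun by (rule diff_trace[OF md])
qed

lemma hodge_wirt:
  assumes "herm_metric U G" "open U" "t \<in> U" "higgs_field U \<theta>"
  shows "wirt (hodge_coeff G \<theta> j k) l t =
    trace ((mwirt (\<theta> j) l t + chern_conn G l t ** \<theta> j t - \<theta> j t ** chern_conn G l t)
           ** (matrix_inv (G t) ** cadj (\<theta> k t) ** G t))"
proof -
  define P where "P = matrix_inv (G t)"
  define Gl where "Gl = mwirt G l t"
  define C where "C = cadj (\<theta> k t)"
  define K where "K = P ** C ** G t"
  have mP: "mdiff (\<lambda>s. matrix_inv (G s)) t" by (rule mdiff_inv[OF assms(1-3)])
  have mG: "mdiff G t" by (rule mdiff_G[OF assms(1,3)])
  note th = theta_facts[OF assms(4,3)]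
  have M1: "mwirt (\<lambda>s. matrix_inv (G s) ** cadj (\<theta> k s)) l t = - (P ** Gl ** P) ** C"
    unfolding mwirt_mult[OF mP th(2)] P_deriv[OF assms(1-3)] th(3)
    by (simp add: P_def Gl_def C_def)
  have M2: "mwirt (\<lambda>s. matrix_inv (G s) ** cadj (\<theta> k s) ** G s) l t = (- (P ** Gl ** P) ** C) ** G t + (P ** C) ** Gl"
    unfolding mwirt_mult[OF mdiff_mult[OF mP th(2)] mG] M1
    by (simp add: P_def Gl_def C_def)
  have M3: "mwirt (\<lambda>s. \<theta> j s ** (matrix_inv (G s) ** cadj (\<theta> k s) ** G s)) l t
      = mwirt (\<theta> j) l t ** K + \<theta> j t ** ((- (P ** Gl ** P) ** C) ** G t + (P ** C) ** Gl)"
    unfolding mwirt_mult[OF th(1) mdiff_mult[OF mdiff_mult[OF mP th(2)] mG]] M2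
    by (simp add: P_def Gl_def C_def K_def)
  have GP: "G t ** P = mat 1" unfolding P_def by (rule herm_facts(4)[OF assms(1,3)])
  have T1: "\<theta> j t ** ((- (P ** Gl ** P) ** C) ** G t) = - ((\<theta> j t ** (P ** Gl)) ** K)"
    by (simp add: K_def mm_neg_left mm_neg_right matrix_mul_assoc)
  have "(P ** Gl) ** \<theta> j t ** K = (P ** Gl) ** (\<theta> j t ** K)" by (simp add: matrix_mul_assoc)
  then have "trace ((P ** Gl) ** \<theta> j t ** K) = trace ((\<theta> j t ** K) ** (P ** Gl))"
    by (simp only: trace_mul_sym[of "P ** Gl" "\<theta> j t ** K"])
  also have "(\<theta> j t ** K) ** (P ** Gl) = \<theta> j t ** P ** C ** (G t ** P) ** Gl"
    by (simp add: K_def matrix_mul_assoc)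
  also have "\<dots> = \<theta> j t ** ((P ** C) ** Gl)"
    by (simp add: GP matrix_mul_assoc)
  finally have T2: "trace (\<theta> j t ** ((P ** C) ** Gl)) = trace ((P ** Gl) ** \<theta> j t ** K)" by simp
  have "wirt (hodge_coeff G \<theta> j k) l t = trace (mwirt (\<lambda>s. \<theta> j s ** (matrix_inv (G s) ** cadj (\<theta> k s) ** G s)) l t)"
    unfolding hodge_fun by (rule wirt_trace[OF hodge_diff(2)[OF assms]])
  also have "\<dots> = trace (mwirt (\<theta> j) l t ** K) - trace ((\<theta> j t ** (P ** Gl)) ** K) + trace ((P ** Gl) ** \<theta> j t ** K)"
    unfolding M3 matrix_add_ldistrib trace_add T1 T2 trace_neg by simp
  also have "\<dots> = trace ((mwirt (\<theta> j) l t + chern_conn G l t ** \<theta> j t - \<theta> j t ** chern_conn G l t) ** K)"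
    by (simp add: chern_conn_def P_def Gl_def mm_add_left mm_diff_left trace_add trace_sub)
  finally show ?thesis by (simp add: K_def P_def C_def)
qed

lemma hodge_sym:
  assumes "herm_metric U G" "open U" "t \<in> U" "higgs_field U \<theta>"
    and hc: "higgs_curv_20 G \<theta> l j t = 0"
  shows "wirt (hodge_coeff G \<theta> j k) l t = wirt (hodge_coeff G \<theta> l k) j t"
proof -
  define K where "K = matrix_inv (G t) ** cadj (\<theta> k t) ** G t"
  have comm: "\<theta> l t ** \<theta> j t = \<theta> j t ** \<theta> l t" using assms(3,4) unfolding higgs_field_def by blast
  have "(mwirt (\<theta> j) l t + chern_conn G l t ** \<theta> j t - \<theta> j t ** chern_conn G l t)
      - (mwirt (\<theta> l) j t + chern_conn G j t ** \<theta> l t - \<theta> l t ** chern_conn G j t)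
      = higgs_curv_20 G \<theta> l j t
        - (mwirt (chern_conn G j) l t - mwirt (chern_conn G l) j t
           + (chern_conn G l t ** chern_conn G j t - chern_conn G j t ** chern_conn G l t))
        - (\<theta> l t ** \<theta> j t - \<theta> j t ** \<theta> l t)"
    unfolding higgs_curv_20_def by (simp add: algebra_simps)
  also have "\<dots> = 0" unfolding hc chern_zero[OF assms(1-3)] comm by simp
  finally have Z: "(mwirt (\<theta> j) l t + chern_conn G l t ** \<theta> j t - \<theta> j t ** chern_conn G l t)
      - (mwirt (\<theta> l) j t + chern_conn G j t ** \<theta> l t - \<theta> l t ** chern_conn G j t) = 0" .
  have "wirt (hodge_coeff G \<theta> j k) l t - wirt (hodge_coeff G \<theta> l k) j t
     = trace (((mwirt (\<theta> j) l t + chern_conn G l t ** \<theta> j t - \<theta> j t ** chern_conn G l t)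
      - (mwirt (\<theta> l) j t + chern_conn G j t ** \<theta> l t - \<theta> l t ** chern_conn G j t)) ** K)"
    unfolding hodge_wirt[OF assms(1-4)] K_def mm_diff_left trace_sub ..
  also have "\<dots> = 0" unfolding Z by (simp add: trace_def)
  finally show ?thesis by simp
qed

lemma hodge_conj:
  assumes "herm_metric U G" "s \<in> U"
  shows "hodge_coeff G \<theta> j k s = cnj (hodge_coeff G \<theta> k j s)"
proof -
  have cG: "cadj (G s) = G s" and cP: "cadj (matrix_inv (G s)) = matrix_inv (G s)"
    using herm_facts[OF assms] by auto
  have "cnj (hodge_coeff G \<theta> k j s) = trace (cadj (\<theta> k s ** (matrix_inv (G s) ** cadj (\<theta> j s) ** G s)))"
    unfolding hodge_fun trace_cadj ..
  also have "\<dots> = trace ((G s ** (\<theta> j s ** matrix_inv (G s))) ** cadj (\<theta> k s))"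
    unfolding cadj_mult cadj_cadj cG cP ..
  also have "\<dots> = trace (G s ** ((\<theta> j s ** matrix_inv (G s)) ** cadj (\<theta> k s)))"
    by (simp add: matrix_mul_assoc)
  also have "\<dots> = trace (((\<theta> j s ** matrix_inv (G s)) ** cadj (\<theta> k s)) ** G s)"
    by (rule trace_mul_sym)
  also have "\<dots> = hodge_coeff G \<theta> j k s"
    unfolding hodge_fun by (simp add: matrix_mul_assoc)
  finally show ?thesis by simp
qed


theorem proposition3p1:
  fixes U :: "(complex^'n) set"
    and G :: "complex^'n \<Rightarrow> complex^'r^'r"
    and \<theta> :: "'n \<Rightarrow> complex^'n \<Rightarrow> complex^'r^'r"
  assumes "open U"
    and "higgs_field U \<theta>"
    and "herm_metric U G"
    and "\<forall>t\<in>U. \<forall>l j. higgs_curv_20 G \<theta> l j t = 0"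
  shows "fundamental_form_d_closed U G \<theta>"
  unfolding fundamental_form_d_closed_def
proof (intro ballI allI conjI)
  fix t l j k assume t: "t \<in> U"
  have hs: "wirt (hodge_coeff G \<theta> j' k') l' t = wirt (hodge_coeff G \<theta> l' k') j' t" for l' j' k'
    using hodge_sym[OF assms(3,1) t assms(2)] assms(4) t by blast
  show "domega_21 G \<theta> l j k t = 0" unfolding domega_21_def using hs[where l'=l and j'=j and k'=k] by simp
  have c: "wirtbar (hodge_coeff G \<theta> j k) l t = cnj (wirt (hodge_coeff G \<theta> k j) l t)" for j k l
  proof -
    have "wirtbar (hodge_coeff G \<theta> j k) l t = wirtbar (\<lambda>s. cnj (hodge_coeff G \<theta> k j s)) l t"
      using hodge_conj[OF assms(3)] by (intro wirtbar_local[OF assms(1) t]) blast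
    also have "\<dots> = cnj (wirt (hodge_coeff G \<theta> k j) l t)"
      by (rule wirtbar_cnj[OF hodge_diff(1)[OF assms(3,1) t assms(2)]])
    finally show ?thesis .
  qed
  show "domega_12 G \<theta> j l k t = 0" unfolding domega_12_def c hs[where l'=l and j'=k and k'=j] by simp
qed

end
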